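(* There is an absolute constant $C>0$ such that for every integer $d\ge1$, every $\alpha>0$, every $n\ge1$ and all points $v_1,\dots,v_n\in[0,1]^d$, if $T$ is a minimal spanning tree on $v_1,\dots,v_n$ (with respect to Euclidean distance), then \[ \sum_{e\in T}\|e\|^\alpha\le (C\sqrt d)^\alpha\, n^{\max(0,\,1-\alpha/d)}. \]
   Context: A minimal spanning tree (MST) on a finite set of points in a metric space is a spanning tree of the complete graph on those points that minimizes the sum of the edge lengths. $\|e\|$ denotes the Euclidean length of an edge $e$. *)

theory Defs
  imports Complex_Main
begin

text \<open>Points of [0,1]^d are represented as functions nat => real, of which only the
coordinates k < d are relevant. The n points are v 0, ..., v (n-1); vertices of the
complete graph are the indices {..<n}; edges are 2-element sets of indices.\<close>

definition eucl_dist :: "nat \<Rightarrow> (nat \<Rightarrow> real) \<Rightarrow> (nat \<Rightarrow> real) \<Rightarrow> real" where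
  "eucl_dist d x y = sqrt (\<Sum>k<d. (x k - y k)^2)"

definition in_unit_cube :: "nat \<Rightarrow> (nat \<Rightarrow> real) \<Rightarrow> bool" where
  "in_unit_cube d x \<longleftrightarrow> (\<forall>k<d. 0 \<le> x k \<and> x k \<le> 1)"

definition edge_len :: "nat \<Rightarrow> (nat \<Rightarrow> nat \<Rightarrow> real) \<Rightarrow> nat set \<Rightarrow> real" where
  "edge_len d v e = Max ((\<lambda>(i,j). eucl_dist d (v i) (v j)) ` (e \<times> e))"

definition complete_edges :: "nat \<Rightarrow> nat set set" where
  "complete_edges n = {{i,j} | i j. i < n \<and> j < n \<and> i \<noteq> j}"

definition graph_connected :: "nat \<Rightarrow> nat set set \<Rightarrow> bool" where
  "graph_connected n T \<longleftrightarrow>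
     (\<forall>i<n. \<forall>j<n. (i, j) \<in> {(a, b). {a, b} \<in> T}\<^sup>*)"

definition is_cycle :: "nat set set \<Rightarrow> nat list \<Rightarrow> bool" where
  "is_cycle T c \<longleftrightarrow> 3 \<le> length c \<and> distinct c \<and>
     (\<forall>i<length c. {c ! i, c ! ((i + 1) mod length c)} \<in> T)"

definition spanning_tree :: "nat \<Rightarrow> nat set set \<Rightarrow> bool" where
  "spanning_tree n T \<longleftrightarrow> T \<subseteq> complete_edges n \<and> graph_connected n T \<and>
     (\<nexists>c. is_cycle T c)"

definition tree_weight :: "nat \<Rightarrow> (nat \<Rightarrow> nat \<Rightarrow> real) \<Rightarrow> nat set set \<Rightarrow> real" where
  "tree_weight d v T = (\<Sum>e\<in>T. edge_len d v e)"

definition is_MST :: "nat \<Rightarrow> (nat \<Rightarrow> nat \<Rightarrow> real) \<Rightarrow> nat \<Rightarrow> nat set set \<Rightarrow> bool" where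
  "is_MST d v n T \<longleftrightarrow> spanning_tree n T \<and>
     (\<forall>T'. spanning_tree n T' \<longrightarrow> tree_weight d v T \<le> tree_weight d v T')"

end

theory Submission
  imports Defs "HOL-Analysis.Analysis"
begin


definition erel :: "nat set set \<Rightarrow> (nat \<times> nat) set" where
  "erel T = {(a, b). {a, b} \<in> T}"

lemma erel_iff[simp]: "(a, b) \<in> erel T \<longleftrightarrow> {a, b} \<in> T"
  by (simp add: erel_def)

lemma gc_erel: "graph_connected n T \<longleftrightarrow> (\<forall>i<n. \<forall>j<n. (i, j) \<in> (erel T)\<^sup>*)"
  by (simp add: graph_connected_def erel_def)

lemma sym_erel: "sym (erel T)"
  by (auto simp: sym_def insert_commute)

lemma erel_rt_sym: "(a, b) \<in> (erel T)\<^sup>* \<Longrightarrow> (b, a) \<in> (erel T)\<^sup>*"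
  using sym_rtrancl[OF sym_erel] by (auto simp: sym_def)

lemma erel_mono: "T \<subseteq> T' \<Longrightarrow> (erel T)\<^sup>* \<subseteq> (erel T')\<^sup>*"
  by (rule rtrancl_mono) (auto simp: erel_def)

lemma erel_mono': "(a, b) \<in> (erel T)\<^sup>* \<Longrightarrow> T \<subseteq> T' \<Longrightarrow> (a, b) \<in> (erel T')\<^sup>*"
  using erel_mono by blast

lemma splitC:
  assumes "(u, w) \<in> (erel H)\<^sup>*"
  shows "(u, w) \<in> (erel (H - {{a, b}}))\<^sup>* \<or>
    ((u, a) \<in> (erel (H - {{a, b}}))\<^sup>* \<and> (b, w) \<in> (erel (H - {{a, b}}))\<^sup>*) \<or>
    ((u, b) \<in> (erel (H - {{a, b}}))\<^sup>* \<and> (a, w) \<in> (erel (H - {{a, b}}))\<^sup>*)"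
  using assms
proof (induction rule: rtrancl_induct)
  case base
  then show ?case by simp
next
  case (step w w')
  let ?R = "erel (H - {{a, b}})"
  show ?case
  proof (cases "{w, w'} = {a, b}")
    case False
    then have st: "(w, w') \<in> ?R" using step(2) by simp
    from step(3) show ?thesis
      using rtrancl_into_rtrancl[OF _ st] by blast
  next
    case True
    then have "(w = a \<and> w' = b) \<or> (w = b \<and> w' = a)" by (auto simp: doubleton_eq_iff)
    with step(3) show ?thesis by auto
  qed
qed

lemma rtrancl_subset_rtrancl': "r \<subseteq> s\<^sup>* \<Longrightarrow> r\<^sup>* \<subseteq> s\<^sup>*"
  by (metis rtrancl_mono rtrancl_idemp)

lemma cycle_remove:
  assumes cyc: "is_cycle G c" and conn: "graph_connected n G"
  shows "graph_connected n (G - {{c ! 0, c ! 1}})"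
proof -
  define L where "L = length c"
  define G' where "G' = G - {{c ! 0, c ! 1}}"
  have L3: "3 \<le> L" and dist: "distinct c" and ed: "\<And>i. i < L \<Longrightarrow> {c ! i, c ! ((i + 1) mod L)} \<in> G"
    using cyc by (auto simp: is_cycle_def L_def)
  have neq: "c ! i = c ! j \<longleftrightarrow> i = j" if "i < L" "j < L" for i j
    using dist that by (simp add: L_def nth_eq_iff_index_eq)
  have path: "i + 1 < L \<Longrightarrow> (c ! 1, c ! (i + 1)) \<in> (erel G')\<^sup>*" for i
  proof (induction i)
    case 0 then show ?case by simp
  next
    case (Suc i)
    have "(i + 1 + 1) mod L = i + 2" using Suc.prems by simp
    then have "{c ! (i + 1), c ! (i + 2)} \<in> G" using ed[of "i + 1"] Suc.prems by simp
    moreover have "{c ! (i + 1), c ! (i + 2)} \<noteq> {c ! 0, c ! 1}"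
    proof
      assume "{c ! (i + 1), c ! (i + 2)} = {c ! 0, c ! 1}"
      then have "c ! (i + 2) \<in> {c ! 0, c ! 1}" by blast
      then show False using neq[of "i+2" 0] neq[of "i+2" 1] Suc.prems by auto
    qed
    ultimately have "(c ! (i + 1), c ! (Suc i + 1)) \<in> erel G'" by (simp add: G'_def)
    moreover have "(c ! 1, c ! (i + 1)) \<in> (erel G')\<^sup>*" using Suc by simp
    ultimately show ?case by (meson rtrancl_into_rtrancl)
  qed
  have "(L - 1 + 1) mod L = 0" using L3 by simp
  then have "{c ! (L - 1), c ! 0} \<in> G" using ed[of "L - 1"] L3 by simp
  moreover have "{c ! (L - 1), c ! 0} \<noteq> {c ! 0, c ! 1}"
  proof
    assume "{c ! (L - 1), c ! 0} = {c ! 0, c ! 1}"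
    then have "c ! (L - 1) \<in> {c ! 0, c ! 1}" by blast
    then show False using neq[of "L - 1" 0] neq[of "L - 1" 1] L3 by auto
  qed
  ultimately have "(c ! (L - 1), c ! 0) \<in> erel G'" by (simp add: G'_def)
  moreover have "(c ! 1, c ! (L - 1)) \<in> (erel G')\<^sup>*"
  proof -
    have "L - 2 + 1 = L - 1" "L - 2 + 1 < L" using L3 by auto
    then show ?thesis using path[of "L - 2"] by simp
  qed
  ultimately have c10: "(c ! 1, c ! 0) \<in> (erel G')\<^sup>*" by (rule rtrancl_into_rtrancl[rotated])
  have "erel G \<subseteq> (erel G')\<^sup>*"
  proof
    fix p assume p: "p \<in> erel G"
    obtain a b where ab: "p = (a, b)" by (cases p)
    show "p \<in> (erel G')\<^sup>*"
    proof (cases "{a, b} = {c ! 0, c ! 1}")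
      case True
      then have "(a = c ! 0 \<and> b = c ! 1) \<or> (a = c ! 1 \<and> b = c ! 0)" by (auto simp: doubleton_eq_iff)
      then show ?thesis using c10 erel_rt_sym[OF c10] ab by auto
    next
      case False
      then have "(a, b) \<in> erel G'" using p ab by (simp add: G'_def)
      then show ?thesis using ab by (simp add: r_into_rtrancl)
    qed
  qed
  then have "(erel G)\<^sup>* \<subseteq> (erel G')\<^sup>*" by (rule rtrancl_subset_rtrancl')
  then show ?thesis using conn unfolding gc_erel G'_def by blast
qed

lemma finite_complete_edges: "finite (complete_edges n)"
proof -
  have "complete_edges n \<subseteq> Pow {..<n}" by (auto simp: complete_edges_def)
  then show ?thesis by (rule finite_subset) simp
qed

lemma exists_tree:
  assumes "G \<subseteq> complete_edges n" "graph_connected n G"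
  shows "\<exists>T \<subseteq> G. spanning_tree n T"
  using assms
proof (induction "card G" arbitrary: G rule: less_induct)
  case less
  show ?case
  proof (cases "\<exists>c. is_cycle G c")
    case False
    then show ?thesis using less.prems by (auto simp: spanning_tree_def)
  next
    case True
    then obtain c where cyc: "is_cycle G c" by blast
    let ?G' = "G - {{c ! 0, c ! 1}}"
    have L3: "3 \<le> length c" and all: "\<forall>i<length c. {c ! i, c ! ((i + 1) mod length c)} \<in> G"
      using cyc unfolding is_cycle_def by blast+
    have m: "(0 + 1) mod length c = 1" using L3 by simp
    have "0 < length c" using L3 by linarith
    then have "{c ! 0, c ! ((0 + 1) mod length c)} \<in> G" using all by blast
    then have "{c ! 0, c ! 1} \<in> G" unfolding m .
    moreover have "finite G" using less.prems(1) finite_complete_edges finite_subset by blast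
    ultimately have "card ?G' < card G" by (meson card_Diff1_less)
    moreover have "?G' \<subseteq> complete_edges n" using less.prems by blast
    moreover have "graph_connected n ?G'" using cycle_remove[OF cyc less.prems(2)] .
    ultimately obtain T where "T \<subseteq> ?G'" "spanning_tree n T" using less.hyps by blast
    then show ?thesis by blast
  qed
qed


lemma eucl_sym: "eucl_dist d x y = eucl_dist d y x"
  unfolding eucl_dist_def by (simp add: power2_commute)

lemma eucl_self[simp]: "eucl_dist d x x = 0"
  unfolding eucl_dist_def by simp

lemma eucl_nonneg: "0 \<le> eucl_dist d x y"
  unfolding eucl_dist_def by (simp add: sum_nonneg)

lemma edge_len_pair: "edge_len d v {i, j} = eucl_dist d (v i) (v j)"
  unfolding edge_len_def
proof (rule Max_eqI)
  show "finite ((\<lambda>(i, j). eucl_dist d (v i) (v j)) ` ({i, j} \<times> {i, j}))" by simp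
  show "eucl_dist d (v i) (v j) \<in> (\<lambda>(i, j). eucl_dist d (v i) (v j)) ` ({i, j} \<times> {i, j})"
    by (rule image_eqI[of _ _ "(i, j)"]) auto
  fix y assume "y \<in> (\<lambda>(i, j). eucl_dist d (v i) (v j)) ` ({i, j} \<times> {i, j})"
  then show "y \<le> eucl_dist d (v i) (v j)"
    by (auto simp: eucl_nonneg eucl_sym)
qed

lemma complete_edgesE:
  assumes "e \<in> complete_edges n"
  obtains i j where "e = {i, j}" "i < n" "j < n" "i \<noteq> j"
  using assms by (auto simp: complete_edges_def)

lemma pair_in_complete:
  assumes "{x, y} \<in> complete_edges n"
  shows "x < n" "y < n" "x \<noteq> y"
proof -
  obtain i j where "{x, y} = {i, j}" "i < n" "j < n" "i \<noteq> j"
    using assms by (rule complete_edgesE)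
  then show "x < n" "y < n" "x \<noteq> y" by (auto simp: doubleton_eq_iff)
qed

lemma edge_len_nonneg: "e \<in> complete_edges n \<Longrightarrow> 0 \<le> edge_len d v e"
  by (auto elim!: complete_edgesE simp: edge_len_pair eucl_nonneg)

lemma conn_after:
  assumes conn: "graph_connected n T" and x: "x < n" and sub: "T - {{x, y}} \<subseteq> H"
    and xy: "(x, y) \<in> (erel H)\<^sup>*"
  shows "graph_connected n H"
proof -
  have yx: "(y, x) \<in> (erel H)\<^sup>*" using erel_rt_sym[OF xy] .
  have xw: "(x, w) \<in> (erel H)\<^sup>*" if w: "w < n" for w
  proof -
    have "(x, w) \<in> (erel T)\<^sup>*" using conn x w by (simp add: gc_erel)
    from splitC[OF this, of x y]
    have "(x, w) \<in> (erel H)\<^sup>* \<or> ((x, x) \<in> (erel H)\<^sup>* \<and> (y, w) \<in> (erel H)\<^sup>*) \<or>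
      ((x, y) \<in> (erel H)\<^sup>* \<and> (x, w) \<in> (erel H)\<^sup>*)"
      using erel_mono[OF sub] by blast
    then show ?thesis using xy by (meson rtrancl_trans)
  qed
  show ?thesis unfolding gc_erel
    using xw erel_rt_sym by (meson rtrancl_trans)
qed

lemma finite_T: "T \<subseteq> complete_edges n \<Longrightarrow> finite T"
  using finite_complete_edges finite_subset by blast

lemma cut:
  assumes mst: "is_MST d v n T" and e: "{x, y} \<in> T" and z: "z < n"
    and xz: "(x, z) \<in> (erel (T - {{x, y}}))\<^sup>*"
  shows "edge_len d v {x, y} \<le> eucl_dist d (v z) (v y)"
proof (rule ccontr)
  assume "\<not> ?thesis"
  then have lt: "eucl_dist d (v z) (v y) < edge_len d v {x, y}" by simp
  have Tc: "T \<subseteq> complete_edges n" and conn: "graph_connected n T"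
    and min: "\<And>T'. spanning_tree n T' \<Longrightarrow> tree_weight d v T \<le> tree_weight d v T'"
    using mst by (auto simp: is_MST_def spanning_tree_def)
  have xn: "x < n" and yn: "y < n" and xy: "x \<noteq> y" using pair_in_complete e Tc by blast+
  have finT: "finite T" using Tc by (rule finite_T)
  define G where "G = (if z = y then T - {{x, y}} else insert {z, y} (T - {{x, y}}))"
  have GC: "G \<subseteq> complete_edges n"
    using Tc z yn by (auto simp: G_def complete_edges_def)
  have finG: "finite G" using GC by (rule finite_T)
  have "(x, y) \<in> (erel G)\<^sup>*"
  proof (cases "z = y")
    case True then show ?thesis using xz by (simp add: G_def)
  next
    case False
    then have "(x, z) \<in> (erel G)\<^sup>*" using erel_mono'[OF xz] by (auto simp: G_def)
    moreover have "(z, y) \<in> erel G" using False by (simp add: G_def)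
    ultimately show ?thesis by (rule rtrancl_into_rtrancl)
  qed
  moreover have sub: "T - {{x, y}} \<subseteq> G" by (auto simp: G_def)
  ultimately have Gconn: "graph_connected n G" using conn_after[OF conn xn] by blast
  obtain T'' where T'': "T'' \<subseteq> G" "spanning_tree n T''" using exists_tree[OF GC Gconn] by blast
  have "tree_weight d v T'' \<le> tree_weight d v G"
    unfolding tree_weight_def
    by (rule sum_mono2[OF finG T''(1)]) (use GC edge_len_nonneg in blast)
  also have "tree_weight d v G < tree_weight d v T"
  proof -
    have w1: "tree_weight d v (T - {{x, y}}) = tree_weight d v T - edge_len d v {x, y}"
      unfolding tree_weight_def using finT e by (simp add: sum_diff1)
    show ?thesis
    proof (cases "z = y")
      case True
      then show ?thesis using w1 lt by (simp add: G_def)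
    next
      case False
      have "tree_weight d v G \<le> tree_weight d v (T - {{x, y}}) + edge_len d v {z, y}"
        unfolding G_def tree_weight_def using False finT
        by (simp add: sum.insert_if edge_len_pair eucl_nonneg)
      then show ?thesis using w1 lt by (simp add: edge_len_pair)
    qed
  qed
  finally show False using min[OF T''(2)] by simp
qed

lemma bridge:
  assumes mst: "is_MST d v n T" and e: "{x, y} \<in> T" and pos: "0 < edge_len d v {x, y}"
  shows "(x, y) \<notin> (erel (T - {{x, y}}))\<^sup>*"
proof
  assume "(x, y) \<in> (erel (T - {{x, y}}))\<^sup>*"
  have "T \<subseteq> complete_edges n" using mst by (auto simp: is_MST_def spanning_tree_def)
  then have "y < n" using pair_in_complete e by blast
  from cut[OF mst e this] \<open>(x, y) \<in> _\<close> pos show False by simp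
qed

lemma sides:
  assumes conn: "graph_connected n T" and e: "{x, y} \<in> T" and x: "x < n" and w: "w < n"
  shows "(x, w) \<in> (erel (T - {{x, y}}))\<^sup>* \<or> (y, w) \<in> (erel (T - {{x, y}}))\<^sup>*"
proof -
  have "(x, w) \<in> (erel T)\<^sup>*" using conn x w by (simp add: gc_erel)
  from splitC[OF this, of x y] show ?thesis by (meson rtrancl_trans)
qed

lemma card_pos_edges:
  assumes mst: "is_MST d v n T" and n: "0 < n"
  shows "card {e \<in> T. 0 < edge_len d v e} \<le> n"
proof -
  define Tp where "Tp = {e \<in> T. 0 < edge_len d v e}"
  have Tc: "T \<subseteq> complete_edges n" and conn: "graph_connected n T"
    using mst by (auto simp: is_MST_def spanning_tree_def)
  define P where "P e c \<longleftrightarrow> c < n \<and> (\<exists>p. e = {p, c} \<and> (0, p) \<in> (erel (T - {e}))\<^sup>*)" for e c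
  have exP: "\<exists>c. P e c" if "e \<in> Tp" for e
  proof -
    from that have "e \<in> complete_edges n" using Tc by (auto simp: Tp_def)
    then obtain x y where xy: "e = {x, y}" "x < n" "y < n" by (auto elim: complete_edgesE)
    have "e \<in> T" using that by (simp add: Tp_def)
    from sides[OF conn this[unfolded xy] xy(2) n]
    have "(0, x) \<in> (erel (T - {e}))\<^sup>* \<or> (0, y) \<in> (erel (T - {e}))\<^sup>*"
      using erel_rt_sym xy(1) by blast
    then show ?thesis
    proof
      assume "(0, x) \<in> (erel (T - {e}))\<^sup>*"
      then show ?thesis using xy by (auto simp: P_def)
    next
      assume "(0, y) \<in> (erel (T - {e}))\<^sup>*"
      then have "P e x" using xy by (auto simp: P_def insert_commute)
      then show ?thesis by blast
    qed
  qed
  define ch where "ch e = (SOME c. P e c)" for e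
  have chP: "P e (ch e)" if "e \<in> Tp" for e
    unfolding ch_def using exP[OF that] by (rule someI_ex)
  have not0c: "(0, c) \<notin> (erel (T - {e}))\<^sup>*" if "e \<in> Tp" "e = {p, c}" "(0, p) \<in> (erel (T - {e}))\<^sup>*" for e p c
  proof
    assume "(0, c) \<in> (erel (T - {e}))\<^sup>*"
    then have "(p, c) \<in> (erel (T - {e}))\<^sup>*" using that(3) erel_rt_sym by (meson rtrancl_trans)
    moreover have "{p, c} \<in> T" "0 < edge_len d v {p, c}" using that(1,2) by (auto simp: Tp_def)
    ultimately show False using bridge[OF mst] that(2) by blast
  qed
  have "inj_on ch Tp"
  proof
    fix e f assume e: "e \<in> Tp" and f: "f \<in> Tp" and eq: "ch e = ch f"
    define c where "c = ch e"
    obtain p where p: "e = {p, c}" "(0, p) \<in> (erel (T - {e}))\<^sup>*" using chP[OF e] by (auto simp: P_def c_def)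
    obtain q where q: "f = {q, c}" "(0, q) \<in> (erel (T - {f}))\<^sup>*" using chP[OF f] eq by (auto simp: P_def c_def)
    show "e = f"
    proof (rule ccontr)
      assume ne: "e \<noteq> f"
      have n1: "(0, c) \<notin> (erel (T - {e}))\<^sup>*" using not0c[OF e p(1) p(2)] .
      have n2: "(0, c) \<notin> (erel (T - {f}))\<^sup>*" using not0c[OF f q(1) q(2)] .
      have "f \<in> T - {e}" using f ne by (auto simp: Tp_def)
      then have "(c, q) \<in> (erel (T - {e}))\<^sup>*" using q(1) by (auto simp: insert_commute)
      then have n3: "(0, q) \<notin> (erel (T - {e}))\<^sup>*" using n1 erel_rt_sym by (meson rtrancl_trans)
      have "e \<in> T - {f}" using e ne by (auto simp: Tp_def)
      then have "(c, p) \<in> (erel (T - {f}))\<^sup>*" using p(1) by (auto simp: insert_commute)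
      then have n4: "(0, p) \<notin> (erel (T - {f}))\<^sup>*" using n2 erel_rt_sym by (meson rtrancl_trans)
      have s1: "T - {e} - {{q, c}} \<subseteq> T - {e}" "T - {e} - {{q, c}} \<subseteq> T - {f}" using q(1) by auto
      from splitC[OF p(2), of q c] show False
        using n1 n3 n4 erel_mono[OF s1(1)] erel_mono[OF s1(2)] by blast
    qed
  qed
  moreover have "ch ` Tp \<subseteq> {..<n}" using chP by (auto simp: P_def)
  ultimately have "card Tp \<le> card {..<n}" by (rule card_inj_on_le) simp
  then show ?thesis by (simp add: Tp_def)
qed



lemma eucl_L2: "eucl_dist d x y = L2_set (\<lambda>k. x k - y k) {..<d}"
  by (simp add: eucl_dist_def L2_set_def)

lemma eucl_tri: "eucl_dist d x z \<le> eucl_dist d x y + eucl_dist d y z"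
proof -
  have "eucl_dist d x z = L2_set (\<lambda>k. (x k - y k) + (y k - z k)) {..<d}"
    by (simp add: eucl_L2)
  also have "\<dots> \<le> eucl_dist d x y + eucl_dist d y z"
    unfolding eucl_L2 by (rule L2_set_triangle_ineq)
  finally show ?thesis .
qed

lemma eucl_sym': "eucl_dist d x y = eucl_dist d y x"
  unfolding eucl_dist_def by (simp add: power2_commute)

lemma eucl_sq: "(eucl_dist d x y)\<^sup>2 = (\<Sum>k<d. (x k - y k)\<^sup>2)"
  unfolding eucl_dist_def by (simp add: sum_nonneg)

lemma eucl_nonneg': "0 \<le> eucl_dist d x y"
  unfolding eucl_dist_def by (simp add: sum_nonneg)

lemma box_dist:
  assumes "\<forall>k<d. \<bar>p k - q k\<bar> \<le> r" "0 \<le> r"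
  shows "eucl_dist d p q \<le> r * sqrt d"
proof -
  have "(\<Sum>k<d. (p k - q k)\<^sup>2) \<le> (\<Sum>k<d. r\<^sup>2)"
  proof (rule sum_mono)
    fix k assume "k \<in> {..<d}"
    then have "\<bar>p k - q k\<bar> \<le> r" using assms by auto
    then show "(p k - q k)\<^sup>2 \<le> r\<^sup>2"
      by (metis abs_ge_zero power2_abs power_mono)
  qed
  then have "eucl_dist d p q \<le> sqrt (d * r\<^sup>2)" unfolding eucl_dist_def by simp
  also have "\<dots> = r * sqrt d" using assms(2) by (simp add: real_sqrt_mult)
  finally show ?thesis .
qed

lemma mid_dist: "eucl_dist d (\<lambda>k. (X k + Y k) / 2) Y = eucl_dist d X Y / 2"
proof -
  have eq: "(\<Sum>k<d. ((X k + Y k) / 2 - Y k)\<^sup>2) = (\<Sum>k<d. (X k - Y k)\<^sup>2) / 4"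
    by (simp add: sum_divide_distrib power2_eq_square field_simps)
  have "eucl_dist d (\<lambda>k. (X k + Y k) / 2) Y = sqrt ((\<Sum>k<d. (X k - Y k)\<^sup>2) / 4)"
    unfolding eucl_dist_def eq ..
  also have "\<dots> = sqrt (\<Sum>k<d. (X k - Y k)\<^sup>2) / 2"
    by (simp add: real_sqrt_divide)
  finally show ?thesis unfolding eucl_dist_def .
qed

lemma apollonius:
  "(eucl_dist d (\<lambda>k. (a k + b k) / 2) Y)\<^sup>2 =
     ((eucl_dist d a Y)\<^sup>2 + (eucl_dist d b Y)\<^sup>2) / 2 - (eucl_dist d a b)\<^sup>2 / 4"
proof -
  have "(\<Sum>k<d. ((a k + b k) / 2 - Y k)\<^sup>2) =
      (\<Sum>k<d. (a k - Y k)\<^sup>2 / 2 + (b k - Y k)\<^sup>2 / 2 - (a k - b k)\<^sup>2 / 4)"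
    by (rule sum.cong) (simp_all add: power2_eq_square field_simps)
  also have "\<dots> = (\<Sum>k<d. (a k - Y k)\<^sup>2) / 2 + (\<Sum>k<d. (b k - Y k)\<^sup>2) / 2 - (\<Sum>k<d. (a k - b k)\<^sup>2) / 4"
    by (simp only: sum_subtractf sum.distrib sum_divide_distrib[symmetric])
  finally show ?thesis unfolding eucl_sq by simp
qed

lemma aux3: "(x::real) \<le> a \<Longrightarrow> x \<le> b \<Longrightarrow> c \<le> x \<Longrightarrow> 3 * x / 4 \<le> (a + b)/2 - c/4"
  by (simp add: field_simps)

lemma aux4: "0 < (v::real) \<Longrightarrow> 3 * v / 4 \<le> u \<Longrightarrow> u \<le> 25 * v / 36 \<Longrightarrow> False"
  by (simp add: field_simps)

lemma geo:
  fixes X Y a b p :: "nat \<Rightarrow> real"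
  assumes d: "0 < d" and DD: "0 < eucl_dist d X Y"
    and aY: "eucl_dist d X Y \<le> eucl_dist d a Y" and bY: "eucl_dist d X Y \<le> eucl_dist d b Y"
    and ab: "eucl_dist d a b \<le> eucl_dist d X Y"
    and p1: "\<forall>k<d. \<bar>p k - (X k + Y k) / 2\<bar> \<le> eucl_dist d X Y / (6 * sqrt d)"
    and p2: "\<forall>k<d. \<bar>p k - (a k + b k) / 2\<bar> \<le> eucl_dist d X Y / (6 * sqrt d)"
  shows False
proof -
  define DD where "DD = eucl_dist d X Y"
  define m where "m = (\<lambda>k. (X k + Y k) / 2)"
  define m' where "m' = (\<lambda>k. (a k + b k) / 2)"
  have sd: "0 < sqrt (real d)" using d by simp
  have r: "DD / (6 * sqrt d) * sqrt d = DD / 6" using sd by simp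
  have r0: "0 \<le> DD / (6 * sqrt d)" using DD sd by (simp add: DD_def)
  have pm: "eucl_dist d p m \<le> DD / 6"
    using box_dist[of d p m "DD / (6 * sqrt d)"] p1 r r0 by (simp add: m_def DD_def)
  have pm': "eucl_dist d p m' \<le> DD / 6"
    using box_dist[of d p m' "DD / (6 * sqrt d)"] p2 r r0 by (simp add: m'_def DD_def)
  have mY: "eucl_dist d m Y = DD / 2" by (simp add: m_def DD_def mid_dist)
  have "eucl_dist d m' Y \<le> eucl_dist d m' p + eucl_dist d p Y" by (rule eucl_tri)
  also have "\<dots> \<le> eucl_dist d m' p + (eucl_dist d p m + eucl_dist d m Y)" using eucl_tri by simp
  finally have up: "eucl_dist d m' Y \<le> 5 * DD / 6" using pm pm' mY by (simp add: eucl_sym')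
  have eqA: "(eucl_dist d m' Y)\<^sup>2 = ((eucl_dist d a Y)\<^sup>2 + (eucl_dist d b Y)\<^sup>2) / 2 - (eucl_dist d a b)\<^sup>2 / 4"
    unfolding m'_def by (rule apollonius)
  have i1: "DD\<^sup>2 \<le> (eucl_dist d a Y)\<^sup>2" "DD\<^sup>2 \<le> (eucl_dist d b Y)\<^sup>2" "(eucl_dist d a b)\<^sup>2 \<le> DD\<^sup>2"
    using aY bY ab DD by (auto simp: DD_def eucl_nonneg' intro!: power_mono)
  have "3 * DD\<^sup>2 / 4 \<le> ((eucl_dist d a Y)\<^sup>2 + (eucl_dist d b Y)\<^sup>2) / 2 - (eucl_dist d a b)\<^sup>2 / 4"
    using i1 by (rule aux3)
  then have low: "3 * DD\<^sup>2 / 4 \<le> (eucl_dist d m' Y)\<^sup>2" using eqA by simp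
  have "(eucl_dist d m' Y)\<^sup>2 \<le> (5 * DD / 6)\<^sup>2"
    using up by (intro power_mono) (simp_all add: eucl_nonneg')
  also have "(5 * DD / 6)\<^sup>2 = 25 * DD\<^sup>2 / 36" by (simp add: power_divide power_mult_distrib)
  finally have hi: "(eucl_dist d m' Y)\<^sup>2 \<le> 25 * DD\<^sup>2 / 36" .
  have "0 < DD\<^sup>2" using DD by (simp add: DD_def)
  from aux4[OF this low hi] show False .
qed



lemma box_vol:
  fixes d :: nat and a b :: "nat \<Rightarrow> real"
  assumes "\<And>k. k < d \<Longrightarrow> a k \<le> b k"
  shows "emeasure (PiM {..<d} (\<lambda>_. lborel)) (PiE {..<d} (\<lambda>k. {a k..b k})) = ennreal (\<Prod>k<d. b k - a k)"
proof -
  interpret product_sigma_finite "\<lambda>_. lborel" by standard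
  have "emeasure (PiM {..<d} (\<lambda>_. lborel)) (PiE {..<d} (\<lambda>k. {a k..b k})) = (\<Prod>k<d. emeasure lborel {a k..b k})"
    using emeasure_PiM[of "{..<d}" "\<lambda>k. {a k..b k}"] by simp
  also have "\<dots> = (\<Prod>k<d. ennreal (b k - a k))"
    by (rule prod.cong) (auto simp: assms)
  also have "\<dots> = ennreal (\<Prod>k<d. b k - a k)"
    by (rule prod_ennreal) (auto simp: assms)
  finally show ?thesis .
qed

lemma boxmeas: fixes d :: nat shows "PiE {..<d} (\<lambda>k. {a k..b k :: real}) \<in> sets (PiM {..<d} (\<lambda>_. lborel))"
  by (rule sets_PiM_I_finite) auto

lemma disjoint_boxes:
  fixes d :: nat and c :: "'i \<Rightarrow> nat \<Rightarrow> real" and s :: "'i \<Rightarrow> real"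
  assumes fin: "finite I"
    and s: "\<And>i. i \<in> I \<Longrightarrow> 0 \<le> s i"
    and sub: "\<And>i k. i \<in> I \<Longrightarrow> k < d \<Longrightarrow> lo \<le> c i k - s i \<and> c i k + s i \<le> hi"
    and disj: "\<And>i j p. i \<in> I \<Longrightarrow> j \<in> I \<Longrightarrow> i \<noteq> j \<Longrightarrow> (\<forall>k<d. \<bar>p k - c i k\<bar> \<le> s i) \<Longrightarrow> (\<forall>k<d. \<bar>p k - c j k\<bar> \<le> s j) \<Longrightarrow> False"
    and lohi: "lo \<le> hi"
  shows "(\<Sum>i\<in>I. (2 * s i) ^ d) \<le> (hi - lo) ^ d"
proof -
  define M where "M = PiM {..<d} (\<lambda>_. lborel :: real measure)"
  define B where "B i = PiE {..<d} (\<lambda>k. {c i k - s i..c i k + s i})" for i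
  have Bm: "B i \<in> sets M" for i unfolding B_def M_def by (rule boxmeas)
  have vol: "emeasure M (B i) = ennreal ((2 * s i) ^ d)" if "i \<in> I" for i
  proof -
    have "emeasure M (B i) = ennreal (\<Prod>k<d. (c i k + s i) - (c i k - s i))"
      unfolding M_def B_def by (rule box_vol) (use s[OF that] in auto)
    then show ?thesis by simp
  qed
  have dj: "disjoint_family_on B I"
    unfolding disjoint_family_on_def
  proof (intro ballI impI)
    fix i j assume ij: "i \<in> I" "j \<in> I" "i \<noteq> j"
    show "B i \<inter> B j = {}"
    proof (rule ccontr)
      assume "B i \<inter> B j \<noteq> {}"
      then obtain p where "p \<in> B i" "p \<in> B j" by blast
      have inB: "\<forall>k<d. \<bar>p k - c l k\<bar> \<le> s l" if "p \<in> B l" for l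
      proof (intro allI impI)
        fix k assume "k < d"
        then have "p k \<in> {c l k - s l..c l k + s l}" using that unfolding B_def by (auto simp: PiE_iff)
        then show "\<bar>p k - c l k\<bar> \<le> s l" by (simp add: abs_le_iff)
      qed
      have "\<forall>k<d. \<bar>p k - c i k\<bar> \<le> s i" "\<forall>k<d. \<bar>p k - c j k\<bar> \<le> s j"
        using inB \<open>p \<in> B i\<close> \<open>p \<in> B j\<close> by blast+
      then show False using disj[OF ij] by blast
    qed
  qed
  have "ennreal (\<Sum>i\<in>I. (2 * s i) ^ d) = (\<Sum>i\<in>I. ennreal ((2 * s i) ^ d))"
    by (rule sum_ennreal[symmetric]) (use s in auto)
  also have "\<dots> = (\<Sum>i\<in>I. emeasure M (B i))"
    by (rule sum.cong) (simp_all add: vol)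
  also have "\<dots> = emeasure M (\<Union>i\<in>I. B i)"
    by (rule sum_emeasure) (use Bm dj fin in auto)
  also have "\<dots> \<le> emeasure M (PiE {..<d} (\<lambda>k. {lo..hi}))"
  proof (rule emeasure_mono)
    show "\<Union> (B ` I) \<subseteq> PiE {..<d} (\<lambda>k. {lo..hi})"
    proof
      fix p assume "p \<in> \<Union> (B ` I)"
      then obtain i where i: "i \<in> I" "p \<in> B i" by blast
      then have ext: "p \<in> extensional {..<d}" and pk: "\<And>k. k < d \<Longrightarrow> p k \<in> {c i k - s i..c i k + s i}"
        unfolding B_def by (auto simp: PiE_iff)
      have "p k \<in> {lo..hi}" if "k < d" for k
        using pk[OF that] sub[OF i(1) that] by auto
      then show "p \<in> PiE {..<d} (\<lambda>k. {lo..hi})" using ext by (auto simp: PiE_iff)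
    qed
    show "PiE {..<d} (\<lambda>k. {lo..hi}) \<in> sets M" unfolding M_def by (rule boxmeas)
  qed
  also have "\<dots> = ennreal ((hi - lo) ^ d)"
    unfolding M_def by (subst box_vol) (use lohi in auto)
  finally show ?thesis using lohi by (simp add: ennreal_le_iff)
qed




definition mid :: "(nat \<Rightarrow> nat \<Rightarrow> real) \<Rightarrow> nat set \<Rightarrow> nat \<Rightarrow> real" where
  "mid v e k = (\<Sum>i\<in>e. v i k) / 2"

lemma mid_pair: "x \<noteq> y \<Longrightarrow> mid v {x, y} k = (v x k + v y k) / 2"
  by (simp add: mid_def)

lemma core:
  assumes mst: "is_MST d v n T" and d: "0 < d" and ee: "e = {x, y}" and e: "e \<in> T"
    and pos: "0 < edge_len d v e"
    and ff: "f = {x', y'}" and f: "f \<in> T" and fe: "f \<noteq> e" and le: "edge_len d v f \<le> edge_len d v e"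
    and xx: "(x, x') \<in> (erel (T - {e}))\<^sup>*"
    and p1: "\<forall>k<d. \<bar>p k - mid v e k\<bar> \<le> edge_len d v e / (6 * sqrt d)"
    and p2: "\<forall>k<d. \<bar>p k - mid v f k\<bar> \<le> edge_len d v f / (6 * sqrt d)"
  shows False
proof -
  have Tc: "T \<subseteq> complete_edges n" using mst by (auto simp: is_MST_def spanning_tree_def)
  have xy: "x \<noteq> y" using pair_in_complete[of x y n] e ee Tc by blast
  have xy': "x' \<noteq> y'" "x' < n" "y' < n" using pair_in_complete[of x' y' n] f ff Tc by blast+
  have "(x', y') \<in> erel (T - {e})" using f fe ff by simp
  then have xy'r: "(x, y') \<in> (erel (T - {e}))\<^sup>*" using rtrancl_into_rtrancl[OF xx] by blast
  have eT: "{x, y} \<in> T" using e ee by simp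
  have xx0: "(x, x') \<in> (erel (T - {{x, y}}))\<^sup>*" using xx ee by simp
  have xy0: "(x, y') \<in> (erel (T - {{x, y}}))\<^sup>*" using xy'r ee by simp
  have c1: "edge_len d v {x, y} \<le> eucl_dist d (v x') (v y)"
    using cut[OF mst eT xy'(2) xx0] .
  have c2: "edge_len d v {x, y} \<le> eucl_dist d (v y') (v y)"
    using cut[OF mst eT xy'(3) xy0] .
  have l1: "edge_len d v e = eucl_dist d (v x) (v y)" by (simp add: ee edge_len_pair)
  have l2: "edge_len d v f = eucl_dist d (v x') (v y')" by (simp add: ff edge_len_pair)
  have sd: "0 < sqrt (real d)" using d by simp
  have p2': "\<forall>k<d. \<bar>p k - (v x' k + v y' k) / 2\<bar> \<le> eucl_dist d (v x) (v y) / (6 * sqrt d)"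
  proof (intro allI impI)
    fix k assume "k < d"
    then have "\<bar>p k - (v x' k + v y' k) / 2\<bar> \<le> edge_len d v f / (6 * sqrt d)"
      using p2 ff xy' by (simp add: mid_pair)
    also have "\<dots> \<le> edge_len d v e / (6 * sqrt d)"
      using le sd by (simp add: divide_right_mono)
    finally show "\<bar>p k - (v x' k + v y' k) / 2\<bar> \<le> eucl_dist d (v x) (v y) / (6 * sqrt d)"
      using l1 by simp
  qed
  have p1': "\<forall>k<d. \<bar>p k - (v x k + v y k) / 2\<bar> \<le> eucl_dist d (v x) (v y) / (6 * sqrt d)"
    using p1 ee xy l1 by (simp add: mid_pair)
  show False
  proof (rule geo[OF d _ _ _ _ p1' p2'])
    show "0 < eucl_dist d (v x) (v y)" using pos l1 by simp
    show "eucl_dist d (v x) (v y) \<le> eucl_dist d (v x') (v y)" using c1 by (simp add: edge_len_pair)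
    show "eucl_dist d (v x) (v y) \<le> eucl_dist d (v y') (v y)" using c2 by (simp add: edge_len_pair)
    show "eucl_dist d (v x') (v y') \<le> eucl_dist d (v x) (v y)" using le l1 l2 by simp
  qed
qed

lemma disj:
  assumes mst: "is_MST d v n T" and d: "0 < d" and e: "e \<in> T" and pos: "0 < edge_len d v e"
    and f: "f \<in> T" and fe: "f \<noteq> e" and le: "edge_len d v f \<le> edge_len d v e"
    and p1: "\<forall>k<d. \<bar>p k - mid v e k\<bar> \<le> edge_len d v e / (6 * sqrt d)"
    and p2: "\<forall>k<d. \<bar>p k - mid v f k\<bar> \<le> edge_len d v f / (6 * sqrt d)"
  shows False
proof -
  have Tc: "T \<subseteq> complete_edges n" and conn: "graph_connected n T"
    using mst by (auto simp: is_MST_def spanning_tree_def)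
  have ec: "e \<in> complete_edges n" "f \<in> complete_edges n" using e f Tc by blast+
  obtain x y where ee: "e = {x, y}" "x < n" "y < n" using complete_edgesE[OF ec(1)] by blast
  obtain x' y' where ff: "f = {x', y'}" "x' < n" using complete_edgesE[OF ec(2)] by blast
  from sides[OF conn e[unfolded ee(1)] ee(2) ff(2)]
  have "(x, x') \<in> (erel (T - {e}))\<^sup>* \<or> (y, x') \<in> (erel (T - {e}))\<^sup>*" using ee by simp
  then show False
  proof
    assume "(x, x') \<in> (erel (T - {e}))\<^sup>*"
    from core[OF mst d ee(1) e pos ff(1) f fe le this p1 p2] show False .
  next
    assume yx: "(y, x') \<in> (erel (T - {e}))\<^sup>*"
    have ee': "e = {y, x}" using ee by (simp add: insert_commute)
    from core[OF mst d ee' e pos ff(1) f fe le yx p1 p2] show False .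
  qed
qed

lemma edge_le_sqrt:
  assumes cube: "\<forall>i<n. in_unit_cube d (v i)" and e: "e \<in> complete_edges n"
  shows "edge_len d v e \<le> sqrt d"
proof -
  obtain x y where ee: "e = {x, y}" "x < n" "y < n" using e by (auto elim: complete_edgesE)
  have "\<bar>v x k - v y k\<bar> \<le> 1" if "k < d" for k
  proof -
    have "0 \<le> v x k" "v x k \<le> 1" "0 \<le> v y k" "v y k \<le> 1"
      using cube ee that by (auto simp: in_unit_cube_def)
    then show ?thesis by (simp add: abs_le_iff)
  qed
  then have "\<forall>k<d. \<bar>v x k - v y k\<bar> \<le> 1" by blast
  then have "eucl_dist d (v x) (v y) \<le> 1 * sqrt d" by (intro box_dist) auto
  then show ?thesis by (simp add: ee edge_len_pair)
qed

lemma sum_d: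
  assumes mst: "is_MST d v n T" and d: "0 < d" and cube: "\<forall>i<n. in_unit_cube d (v i)"
  shows "(\<Sum>e\<in>{e \<in> T. 0 < edge_len d v e}. (edge_len d v e) ^ d) \<le> (9 * sqrt d) ^ d"
proof -
  define Tp where "Tp = {e \<in> T. 0 < edge_len d v e}"
  have Tc: "T \<subseteq> complete_edges n" using mst by (auto simp: is_MST_def spanning_tree_def)
  have finTp: "finite Tp" using finite_T[OF Tc] by (simp add: Tp_def)
  have sd: "0 < sqrt (real d)" using d by simp
  define s where "s e = edge_len d v e / (6 * sqrt d)" for e
  have s0: "0 \<le> s e" if "e \<in> Tp" for e using that sd by (simp add: s_def Tp_def)
  have s1: "s e \<le> 1 / 6" if "e \<in> Tp" for e
  proof -
    have "edge_len d v e \<le> sqrt d" using edge_le_sqrt[OF cube] that Tc by (auto simp: Tp_def)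
    then have "edge_len d v e / (6 * sqrt d) \<le> sqrt d / (6 * sqrt d)"
      using sd by (intro divide_right_mono) auto
    also have "\<dots> = 1 / 6" using sd by simp
    finally show ?thesis by (simp add: s_def)
  qed
  have midc: "0 \<le> mid v e k \<and> mid v e k \<le> 1" if "e \<in> Tp" "k < d" for e k
  proof -
    have "e \<in> complete_edges n" using that Tc by (auto simp: Tp_def)
    then obtain x y where ee: "e = {x, y}" "x < n" "y < n" "x \<noteq> y" by (rule complete_edgesE)
    have "0 \<le> v x k" "v x k \<le> 1" "0 \<le> v y k" "v y k \<le> 1" using cube ee that by (auto simp: in_unit_cube_def)
    then show ?thesis using ee by (simp add: mid_pair)
  qed
  have "(\<Sum>e\<in>Tp. (2 * s e) ^ d) \<le> (2 - (-1)) ^ d"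
  proof (rule disjoint_boxes[where c = "mid v"])
    show "finite Tp" by (rule finTp)
    show "0 \<le> s i" if "i \<in> Tp" for i using s0 that .
    show "- 1 \<le> mid v i k - s i \<and> mid v i k + s i \<le> 2" if "i \<in> Tp" "k < d" for i k
      using midc[OF that] s1[OF that(1)] s0[OF that(1)] by linarith
    show "(-1::real) \<le> 2" by simp
    fix i j p assume ij: "i \<in> Tp" "j \<in> Tp" "i \<noteq> j"
      and pi: "\<forall>k<d. \<bar>p k - mid v i k\<bar> \<le> s i" and pj: "\<forall>k<d. \<bar>p k - mid v j k\<bar> \<le> s j"
    have iT: "i \<in> T" "0 < edge_len d v i" "j \<in> T" "0 < edge_len d v j" using ij by (auto simp: Tp_def)
    have ne: "j \<noteq> i" "i \<noteq> j" using ij by auto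
    show False
    proof (cases "edge_len d v j \<le> edge_len d v i")
      case True
      from disj[OF mst d iT(1) iT(2) iT(3) ne(1) True pi[unfolded s_def] pj[unfolded s_def]] show False .
    next
      case False
      then have le: "edge_len d v i \<le> edge_len d v j" by simp
      from disj[OF mst d iT(3) iT(4) iT(1) ne(2) le pj[unfolded s_def] pi[unfolded s_def]] show False .
    qed
  qed
  moreover have "(\<Sum>e\<in>Tp. (2 * s e) ^ d) = (\<Sum>e\<in>Tp. (edge_len d v e) ^ d) / (3 * sqrt d) ^ d"
    unfolding sum_divide_distrib
  proof (rule sum.cong)
    fix e
    have "2 * s e = edge_len d v e / (3 * sqrt d)" by (simp add: s_def)
    then show "(2 * s e) ^ d = (edge_len d v e) ^ d / (3 * sqrt d) ^ d" by (simp only: power_divide)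
  qed simp
  ultimately have "(\<Sum>e\<in>Tp. (edge_len d v e) ^ d) / (3 * sqrt d) ^ d \<le> 3 ^ d" by simp
  then have "(\<Sum>e\<in>Tp. (edge_len d v e) ^ d) \<le> 3 ^ d * (3 * sqrt d) ^ d"
    using sd by (simp add: pos_divide_le_eq)
  also have "\<dots> = (3 * (3 * sqrt d)) ^ d" by (simp only: power_mult_distrib)
  also have "\<dots> = (9 * sqrt d) ^ d" by simp
  finally show ?thesis by (simp add: Tp_def)
qed



lemma aux_div:
  fixes B :: real
  assumes "0 < B" "0 < M" "T = B / M" "S = A * B"
  shows "S / T = M * A"
proof -
  have "S / T = (A * B) / (B / M)" using assms(3,4) by simp
  also have "\<dots> = M * A" using assms(1,2) by (simp add: field_simps)
  finally show ?thesis .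
qed

lemma concave_sum:
  fixes a :: "'i \<Rightarrow> real"
  assumes fin: "finite I" and a0: "\<And>i. i \<in> I \<Longrightarrow> 0 \<le> a i" and q: "0 < q" "q < 1"
  shows "(\<Sum>i\<in>I. a i powr q) \<le> real (card I) powr (1 - q) * (\<Sum>i\<in>I. a i) powr q"
proof (cases "(\<Sum>i\<in>I. a i) = 0")
  case True
  then have "\<forall>i\<in>I. a i = 0" using sum_nonneg_eq_0_iff[OF fin] a0 by blast
  then show ?thesis by simp
next
  case False
  define S where "S = (\<Sum>i\<in>I. a i)"
  define m where "m = real (card I)"
  have S0: "0 < S" using False a0 unfolding S_def by (simp add: sum_nonneg order_le_neq_trans)
  have "I \<noteq> {}" using False by auto
  then have m0: "0 < m" using fin by (simp add: m_def card_gt_0_iff)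
  define t where "t = S / m"
  have t0: "0 < t" using S0 m0 by (simp add: t_def)
  have each: "a i powr q * t powr (1 - q) \<le> q * a i + (1 - q) * t" if "i \<in> I" for i
  proof (cases "a i = 0")
    case True
    then show ?thesis using q t0 by simp
  next
    case False
    then have "0 < a i" using a0[OF that] by simp
    then show ?thesis using Youngs_inequality_0[of q "1 - q" "a i" t] q t0 by simp
  qed
  have "(\<Sum>i\<in>I. a i powr q) * t powr (1 - q) = (\<Sum>i\<in>I. a i powr q * t powr (1 - q))"
    by (simp add: sum_distrib_right)
  also have "\<dots> \<le> (\<Sum>i\<in>I. q * a i + (1 - q) * t)"
    by (rule sum_mono) (rule each)
  also have "\<dots> = q * S + (1 - q) * t * m"
    by (simp add: sum.distrib sum_distrib_left S_def m_def)
  also have "\<dots> = S" using m0 by (simp add: t_def field_simps)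
  finally have A: "(\<Sum>i\<in>I. a i powr q) * t powr (1 - q) \<le> S" .
  have tp: "0 < t powr (1 - q)" using t0 by simp
  have "(\<Sum>i\<in>I. a i powr q) \<le> S / t powr (1 - q)"
    using A tp by (simp add: pos_le_divide_eq)
  also have "S / t powr (1 - q) = m powr (1 - q) * S powr q"
  proof -
    have "t powr (1 - q) = S powr (1 - q) / m powr (1 - q)"
      unfolding t_def using S0 m0 by (simp add: powr_divide)
    moreover have "S = S powr q * S powr (1 - q)"
      using S0 by (simp add: powr_add[symmetric])
    ultimately show ?thesis
      by (intro aux_div) (use S0 m0 in auto)
  qed
  finally show ?thesis by (simp add: S_def m_def)
qed


theorem mainTheorem2:
  shows "\<exists>C::real. C > 0 \<and>
    (\<forall>(d::nat) (\<alpha>::real) (n::nat) (v::nat \<Rightarrow> nat \<Rightarrow> real) T.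
       1 \<le> d \<longrightarrow> 0 < \<alpha> \<longrightarrow> 1 \<le> n \<longrightarrow>
       (\<forall>i<n. in_unit_cube d (v i)) \<longrightarrow> is_MST d v n T \<longrightarrow>
       (\<Sum>e\<in>T. (edge_len d v e) powr \<alpha>)
         \<le> (C * sqrt (real d)) powr \<alpha> * (real n) powr (max 0 (1 - \<alpha> / real d)))"
proof (intro exI[of _ 9] conjI allI impI)
  show "(0::real) < 9" by simp
  fix d :: nat and \<alpha> :: real and n :: nat and v :: "nat \<Rightarrow> nat \<Rightarrow> real" and T
  assume d1: "1 \<le> d" and a0: "0 < \<alpha>" and n1: "1 \<le> n"
    and cube: "\<forall>i<n. in_unit_cube d (v i)" and mst: "is_MST d v n T"
  have d: "0 < d" using d1 by simp
  have Tc: "T \<subseteq> complete_edges n" using mst by (auto simp: is_MST_def spanning_tree_def)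
  have finT: "finite T" using Tc by (rule finite_T)
  define Tp where "Tp = {e \<in> T. 0 < edge_len d v e}"
  have finTp: "finite Tp" using finT by (simp add: Tp_def)
  have lnn: "0 \<le> edge_len d v e" if "e \<in> T" for e using edge_len_nonneg that Tc by blast
  have lsq: "edge_len d v e \<le> sqrt d" if "e \<in> T" for e using edge_le_sqrt[OF cube] that Tc by blast
  have eq: "(\<Sum>e\<in>T. (edge_len d v e) powr \<alpha>) = (\<Sum>e\<in>Tp. (edge_len d v e) powr \<alpha>)"
  proof (rule sum.mono_neutral_right[OF finT])
    show "Tp \<subseteq> T" by (auto simp: Tp_def)
    show "\<forall>e\<in>T - Tp. edge_len d v e powr \<alpha> = 0"
    proof
      fix e assume "e \<in> T - Tp"
      then have "edge_len d v e = 0" using lnn by (force simp: Tp_def)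
      then show "edge_len d v e powr \<alpha> = 0" by simp
    qed
  qed
  define S where "S = (\<Sum>e\<in>Tp. (edge_len d v e) ^ d)"
  have SK: "S \<le> (9 * sqrt d) ^ d" unfolding S_def Tp_def by (rule sum_d[OF mst d cube])
  have S0: "0 \<le> S" unfolding S_def by (rule sum_nonneg) (auto simp: Tp_def)
  have sd1: "1 \<le> sqrt (real d)" using d1 by simp
  have n0: "0 < real n" using n1 by simp
  show "(\<Sum>e\<in>T. (edge_len d v e) powr \<alpha>) \<le> (9 * sqrt (real d)) powr \<alpha> * (real n) powr (max 0 (1 - \<alpha> / real d))"
  proof (cases "real d \<le> \<alpha>")
    case True
    then have mx: "max 0 (1 - \<alpha> / real d) = 0" using d by (simp add: field_simps)
    have each: "edge_len d v e powr \<alpha> \<le> (edge_len d v e) ^ d * sqrt d powr (\<alpha> - d)" if "e \<in> Tp" for e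
    proof -
      have lp: "0 < edge_len d v e" using that by (simp add: Tp_def)
      have "edge_len d v e powr \<alpha> = edge_len d v e powr (real d + (\<alpha> - d))" by simp
      also have "\<dots> = edge_len d v e powr (real d) * edge_len d v e powr (\<alpha> - d)"
        by (rule powr_add)
      also have "\<dots> = (edge_len d v e) ^ d * edge_len d v e powr (\<alpha> - d)"
        using lp by (simp add: powr_realpow)
      also have "\<dots> \<le> (edge_len d v e) ^ d * sqrt d powr (\<alpha> - d)"
        using lp lsq[of e] that True by (intro mult_left_mono powr_mono2) (auto simp: Tp_def)
      finally show ?thesis .
    qed
    have "(\<Sum>e\<in>T. (edge_len d v e) powr \<alpha>) \<le> (\<Sum>e\<in>Tp. (edge_len d v e) ^ d * sqrt d powr (\<alpha> - d))"
      unfolding eq by (rule sum_mono) (rule each)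
    also have "\<dots> = S * sqrt d powr (\<alpha> - d)" by (simp add: S_def sum_distrib_right)
    also have "\<dots> \<le> (9 * sqrt d) ^ d * sqrt d powr (\<alpha> - d)"
      using SK by (intro mult_right_mono) auto
    also have "\<dots> = 9 powr (real d) * sqrt d powr (real d) * sqrt d powr (\<alpha> - d)"
      using sd1 by (simp add: powr_realpow power_mult_distrib)
    also have "\<dots> = 9 powr (real d) * sqrt d powr \<alpha>"
      by (simp add: mult.assoc powr_add[symmetric])
    also have "\<dots> \<le> 9 powr \<alpha> * sqrt d powr \<alpha>"
      using True by (intro mult_right_mono powr_mono) auto
    also have "\<dots> = (9 * sqrt (real d)) powr \<alpha> * (real n) powr (max 0 (1 - \<alpha> / real d))"
      using n0 by (simp add: mx powr_mult)
    finally show ?thesis .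
  next
    case False
    define q where "q = \<alpha> / real d"
    have q: "0 < q" "q < 1" using False a0 d by (auto simp: q_def field_simps)
    have mx: "max 0 (1 - \<alpha> / real d) = 1 - q" using q by (simp add: q_def)
    have each: "edge_len d v e powr \<alpha> = ((edge_len d v e) ^ d) powr q" if "e \<in> Tp" for e
    proof -
      have lp: "0 < edge_len d v e" using that by (simp add: Tp_def)
      have "((edge_len d v e) ^ d) powr q = (edge_len d v e powr (real d)) powr q"
        using lp by (simp add: powr_realpow)
      also have "\<dots> = edge_len d v e powr (real d * q)" by (simp add: powr_powr)
      also have "real d * q = \<alpha>" using d by (simp add: q_def)
      finally show ?thesis by simp
    qed
    have "(\<Sum>e\<in>T. (edge_len d v e) powr \<alpha>) = (\<Sum>e\<in>Tp. ((edge_len d v e) ^ d) powr q)"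
      unfolding eq by (rule sum.cong) (simp_all add: each)
    also have "\<dots> \<le> real (card Tp) powr (1 - q) * S powr q"
      unfolding S_def by (rule concave_sum[OF finTp _ q]) (auto simp: Tp_def)
    also have "\<dots> \<le> real n powr (1 - q) * ((9 * sqrt d) ^ d) powr q"
    proof (rule mult_mono)
      have "card Tp \<le> n" unfolding Tp_def by (rule card_pos_edges[OF mst]) (use n1 in simp)
      then show "real (card Tp) powr (1 - q) \<le> real n powr (1 - q)"
        using q by (intro powr_mono2) auto
      show "S powr q \<le> ((9 * sqrt d) ^ d) powr q"
        using q SK S0 by (intro powr_mono2) auto
    qed auto
    also have "((9 * sqrt d) ^ d) powr q = (9 * sqrt (real d)) powr \<alpha>"
    proof -
      have "((9 * sqrt d) ^ d) powr q = ((9 * sqrt d) powr (real d)) powr q"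
        using sd1 by (simp add: powr_realpow)
      also have "\<dots> = (9 * sqrt d) powr (real d * q)" by (simp add: powr_powr)
      also have "real d * q = \<alpha>" using d by (simp add: q_def)
      finally show ?thesis by simp
    qed
    finally show ?thesis by (simp add: mx mult.commute)
  qed
qed


end
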